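(* Consider the setting described in the context (linear problem, Gauss–Radau collocation nodes, $L$ time steps, arbitrary lower-triangular preconditioner $\mathbf{Q}_\Delta$). Then the smoother of PFASST converges if the CFL number $\mu$ is small enough. More precisely, there exist a fixed value $\mu^*_{S,0}>0$ and a constant $c>0$ independent of $\mu$ such that for all $0<\mu<\mu^*_{S,0}$, $$\rho\big(\mathbf{T}_S(\mu)\big)\le c\,\mu^{1/L},$$ where $\mathbf{T}_S(\mu)=\mathbf{I}_{LMN}-\hat{\mathbf{P}}^{-1}\mathbf{C}$ and $\rho$ denotes the spectral radius.
   Context: Fix positive integers $L$ (number of time steps), $M$ (number of collocation nodes) and $N$ (number of spatial degrees of freedom). Let $0<\tau_1<\dots<\tau_M=1$ be the (right) Gauss–Radau nodes on $[0,1]$, $\ell_j$ the associated Lagrange basis polynomials, and $\mathbf{Q}=(q_{m,j})\in\mathbb{R}^{M\times M}$ with $q_{m,j}=\int_0^{\tau_m}\ell_j(s)\,ds$ (collocation matrix). Let $\mathbf{Q}_\Delta\in\mathbb{R}^{M\times M}$ be the lower-triangular weight matrix of a simpler quadrature rule (the SDC preconditioner). Let $\mathbf{A}\in\mathbb{C}^{N\times N}$ (spatial matrix) and $\mu>0$ (CFL number). Let $\mathbf{N}_M\in\mathbb{R}^{M\times M}$ have all entries of its last column equal to $1$ and all other entries $0$, let $\mathbf{H}=\mathbf{N}_M\otimes\mathbf{I}_N$, and let $\mathbf{E}\in\mathbb{R}^{L\times L}$ have ones on the first subdiagonal and zeros elsewhere. The composite collocation matrix is $\mathbf{C}=\mathbf{I}_{LMN}-\mu\,\mathbf{I}_L\otimes\mathbf{Q}\otimes\mathbf{A}-\mathbf{E}\otimes\mathbf{H}$.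 The fine-level approximative block Jacobi preconditioner is $\hat{\mathbf{P}}=\mathbf{I}_{LMN}-\mu\,\mathbf{I}_L\otimes\mathbf{Q}_\Delta\otimes\mathbf{A}$, assumed invertible, and the smoother's iteration matrix is $\mathbf{T}_S(\mu)=\mathbf{I}_{LMN}-\hat{\mathbf{P}}^{-1}\mathbf{C}$. *)

theory Defs
  imports "HOL-Analysis.Analysis" "Jordan_Normal_Form.Spectral_Radius"
    "Jordan_Normal_Form.Gauss_Jordan_Elimination"
begin

definition kron :: "'a::times mat \<Rightarrow> 'a mat \<Rightarrow> 'a mat" where
  "kron X Y = mat (dim_row X * dim_row Y) (dim_col X * dim_col Y)
     (\<lambda>(i,j). X $$ (i div dim_row Y, j div dim_col Y) * Y $$ (i mod dim_row Y, j mod dim_col Y))"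

(* Right Gauss-Radau nodes 0 < tau_0 < ... < tau_{M-1} = 1 on [0,1] (0-based indices):
   the M-point rule with the fixed node 1 and maximal degree of exactness 2M-2. *)
definition gauss_radau_right :: "nat \<Rightarrow> (nat \<Rightarrow> real) \<Rightarrow> bool" where
  "gauss_radau_right M \<tau> \<longleftrightarrow> 0 < M \<and> 0 < \<tau> 0 \<and> (\<forall>i j. i < j \<and> j < M \<longrightarrow> \<tau> i < \<tau> j) \<and>
     \<tau> (M - 1) = 1 \<and>
     (\<exists>w :: nat \<Rightarrow> real. \<forall>k \<le> 2 * M - 2. (\<Sum>j<M. w j * \<tau> j ^ k) = 1 / real (k + 1))"

definition lagrange_basis :: "nat \<Rightarrow> (nat \<Rightarrow> real) \<Rightarrow> nat \<Rightarrow> real \<Rightarrow> real" where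
  "lagrange_basis M \<tau> j s = (\<Prod>k\<in>{..<M} - {j}. (s - \<tau> k) / (\<tau> j - \<tau> k))"

definition coll_Q :: "nat \<Rightarrow> (nat \<Rightarrow> real) \<Rightarrow> real mat" where
  "coll_Q M \<tau> = mat M M (\<lambda>(m,j). integral {0..\<tau> m} (lagrange_basis M \<tau> j))"

definition N_mat :: "nat \<Rightarrow> complex mat" where
  "N_mat M = mat M M (\<lambda>(i,j). if j = M - 1 then 1 else 0)"

definition E_mat :: "nat \<Rightarrow> complex mat" where
  "E_mat L = mat L L (\<lambda>(i,j). if i = j + 1 then 1 else 0)"

definition cmat_of :: "real mat \<Rightarrow> complex mat" where
  "cmat_of X = map_mat complex_of_real X"

definition C_mat :: "nat \<Rightarrow> nat \<Rightarrow> nat \<Rightarrow> (nat \<Rightarrow> real) \<Rightarrow> complex mat \<Rightarrow> real \<Rightarrow> complex mat" where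
  "C_mat L M N \<tau> A \<mu> = 1\<^sub>m (L*M*N)
     - complex_of_real \<mu> \<cdot>\<^sub>m kron (kron (1\<^sub>m L) (cmat_of (coll_Q M \<tau>))) A
     - kron (E_mat L) (kron (N_mat M) (1\<^sub>m N))"

definition P_hat :: "nat \<Rightarrow> nat \<Rightarrow> nat \<Rightarrow> real mat \<Rightarrow> complex mat \<Rightarrow> real \<Rightarrow> complex mat" where
  "P_hat L M N QD A \<mu> = 1\<^sub>m (L*M*N)
     - complex_of_real \<mu> \<cdot>\<^sub>m kron (kron (1\<^sub>m L) (cmat_of QD)) A"

definition T_S :: "nat \<Rightarrow> nat \<Rightarrow> nat \<Rightarrow> (nat \<Rightarrow> real) \<Rightarrow> real mat \<Rightarrow> complex mat \<Rightarrow> real \<Rightarrow> complex mat" where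
  "T_S L M N \<tau> QD A \<mu> = 1\<^sub>m (L*M*N)
     - the (mat_inverse (P_hat L M N QD A \<mu>)) * C_mat L M N \<tau> A \<mu>"

end

theory Submission
  imports Defs
begin

lemma key:
  fixes g k r :: "nat \<Rightarrow> nat \<Rightarrow> complex" and v :: "nat \<Rightarrow> complex" and b :: "nat \<Rightarrow> nat"
    and lam :: complex and \<mu> \<epsilon> :: real and n :: nat
  assumes ex: "\<exists>j<n. v j \<noteq> 0" and ep: "\<epsilon> > 0" and mu: "\<mu> \<ge> 0"
    and hg: "\<And>i j. i<n \<Longrightarrow> j<n \<Longrightarrow> g i j \<noteq> 0 \<Longrightarrow> b i = Suc (b j)"
    and hk: "\<And>i j. i<n \<Longrightarrow> j<n \<Longrightarrow> k i j \<noteq> 0 \<Longrightarrow> b i = b j"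
    and hr: "\<And>i j. i<n \<Longrightarrow> j<n \<Longrightarrow> r i j \<noteq> 0 \<Longrightarrow> b i = b j"
    and eq: "\<And>i. i<n \<Longrightarrow> lam * v i = (\<Sum>j<n. g i j * v j) + of_real \<mu> * (\<Sum>j<n. r i j * v j)
               + lam * of_real \<mu> * (\<Sum>j<n. k i j * v j)"
  shows "cmod lam \<le> \<epsilon> * (\<Sum>i<n. \<Sum>j<n. cmod (g i j)) + \<mu> * (\<Sum>i<n. \<Sum>j<n. cmod (r i j))
           + cmod lam * \<mu> * (\<Sum>i<n. \<Sum>j<n. cmod (k i j))"
proof -
  define w where "w j = \<epsilon> ^ b j" for j
  have wpos: "w j > 0" for j using ep by (simp add: w_def)
  define S where "S = (\<lambda>j. cmod (v j) * w j) ` {..<n}"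
  from ex obtain j0 where j0: "j0 < n" "v j0 \<noteq> 0" by auto
  have finS: "finite S" "S \<noteq> {}" using j0 by (auto simp: S_def)
  define m where "m = Max S"
  obtain i0 where i0: "i0 < n" "cmod (v i0) * w i0 = m"
    using Max_in[OF finS] unfolding m_def S_def by auto
  have bnd: "cmod (v j) * w j \<le> m" if "j < n" for j
    unfolding m_def using finS that by (intro Max_ge) (auto simp: S_def)
  have mpos: "m > 0"
    using bnd[OF j0(1)] j0(2) wpos[of j0] by (smt (verit) mult_pos_pos zero_less_norm_iff)
  define a where "a = m / w i0"
  have apos: "a > 0" using mpos wpos by (simp add: a_def)
  have vi0: "cmod (v i0) = a" using i0 wpos[of i0] by (simp add: a_def field_simps)
  have bv: "cmod (v j) \<le> m / w j" if "j < n" for j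
    using bnd[OF that] wpos[of j] by (simp add: field_simps)
  have gj: "cmod (g i0 j * v j) \<le> cmod (g i0 j) * (\<epsilon> * a)" if "j < n" for j
  proof (cases "g i0 j = 0")
    case True then show ?thesis by simp
  next
    case False
    then have "b i0 = Suc (b j)" using hg i0(1) that by auto
    then have "w i0 = \<epsilon> * w j" by (simp add: w_def)
    then have "m / w j = \<epsilon> * a" using ep wpos[of j] by (simp add: a_def field_simps)
    then show ?thesis using bv[OF that] by (simp add: norm_mult mult_left_mono)
  qed
  have kj: "cmod (k i0 j * v j) \<le> cmod (k i0 j) * a" if "j < n" for j
  proof (cases "k i0 j = 0")
    case True then show ?thesis by simp
  next
    case False
    then have "b i0 = b j" using hk i0(1) that by auto
    then have "m / w j = a" by (simp add: a_def w_def)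
    then show ?thesis using bv[OF that] by (simp add: norm_mult mult_left_mono)
  qed
  have rj: "cmod (r i0 j * v j) \<le> cmod (r i0 j) * a" if "j < n" for j
  proof (cases "r i0 j = 0")
    case True then show ?thesis by simp
  next
    case False
    then have "b i0 = b j" using hr i0(1) that by auto
    then have "m / w j = a" by (simp add: a_def w_def)
    then show ?thesis using bv[OF that] by (simp add: norm_mult mult_left_mono)
  qed
  define gs where "gs = (\<Sum>j<n. cmod (g i0 j))"
  define ks where "ks = (\<Sum>j<n. cmod (k i0 j))"
  define rs where "rs = (\<Sum>j<n. cmod (r i0 j))"
  have G1: "cmod (\<Sum>j<n. g i0 j * v j) \<le> \<epsilon> * a * gs"
  proof -
    have "cmod (\<Sum>j<n. g i0 j * v j) \<le> (\<Sum>j<n. cmod (g i0 j * v j))" by (rule norm_sum)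
    also have "\<dots> \<le> (\<Sum>j<n. cmod (g i0 j) * (\<epsilon> * a))" by (rule sum_mono) (use gj in auto)
    also have "\<dots> = \<epsilon> * a * gs" by (simp add: gs_def sum_distrib_left mult_ac)
    finally show ?thesis .
  qed
  have K1: "cmod (\<Sum>j<n. k i0 j * v j) \<le> a * ks"
  proof -
    have "cmod (\<Sum>j<n. k i0 j * v j) \<le> (\<Sum>j<n. cmod (k i0 j * v j))" by (rule norm_sum)
    also have "\<dots> \<le> (\<Sum>j<n. cmod (k i0 j) * a)" by (rule sum_mono) (use kj in auto)
    also have "\<dots> = a * ks" by (simp add: ks_def sum_distrib_left mult_ac)
    finally show ?thesis .
  qed
  have R1: "cmod (\<Sum>j<n. r i0 j * v j) \<le> a * rs"
  proof -
    have "cmod (\<Sum>j<n. r i0 j * v j) \<le> (\<Sum>j<n. cmod (r i0 j * v j))" by (rule norm_sum)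
    also have "\<dots> \<le> (\<Sum>j<n. cmod (r i0 j) * a)" by (rule sum_mono) (use rj in auto)
    also have "\<dots> = a * rs" by (simp add: rs_def sum_distrib_left mult_ac)
    finally show ?thesis .
  qed
  have "cmod lam * a = cmod (lam * v i0)" by (simp add: norm_mult vi0)
  also have "\<dots> \<le> cmod (\<Sum>j<n. g i0 j * v j) + cmod (of_real \<mu> * (\<Sum>j<n. r i0 j * v j))
      + cmod (lam * of_real \<mu> * (\<Sum>j<n. k i0 j * v j))"
    unfolding eq[OF i0(1)] by (rule order_trans[OF norm_triangle_ineq add_right_mono[OF norm_triangle_ineq]])
  also have "\<dots> \<le> \<epsilon> * a * gs + \<mu> * (a * rs) + cmod lam * \<mu> * (a * ks)"
    using G1 K1 R1 mu by (intro add_mono) (auto simp: norm_mult intro: mult_left_mono)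
  finally have "cmod lam * a \<le> a * (\<epsilon> * gs + \<mu> * rs + cmod lam * \<mu> * ks)"
    by (simp add: algebra_simps)
  then have row: "cmod lam \<le> \<epsilon> * gs + \<mu> * rs + cmod lam * \<mu> * ks"
    using apos by (simp add: mult.commute)
  have "gs \<le> (\<Sum>i<n. \<Sum>j<n. cmod (g i j))" unfolding gs_def
    by (rule member_le_sum[of i0 "{..<n}" "\<lambda>i. \<Sum>j<n. cmod (g i j)"]) (use i0 in \<open>auto intro: sum_nonneg\<close>)
  moreover have "rs \<le> (\<Sum>i<n. \<Sum>j<n. cmod (r i j))" unfolding rs_def
    by (rule member_le_sum[of i0 "{..<n}" "\<lambda>i. \<Sum>j<n. cmod (r i j)"]) (use i0 in \<open>auto intro: sum_nonneg\<close>)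
  moreover have "ks \<le> (\<Sum>i<n. \<Sum>j<n. cmod (k i j))" unfolding ks_def
    by (rule member_le_sum[of i0 "{..<n}" "\<lambda>i. \<Sum>j<n. cmod (k i j)"]) (use i0 in \<open>auto intro: sum_nonneg\<close>)
  ultimately show ?thesis using row ep mu
    by (smt (verit) mult_left_mono mult_nonneg_nonneg norm_ge_zero)
qed


lemma kron_dims[simp]: "dim_row (kron X Y) = dim_row X * dim_row Y" "dim_col (kron X Y) = dim_col X * dim_col Y"
  by (simp_all add: kron_def)

lemma kron_index: "i < dim_row X * dim_row Y \<Longrightarrow> j < dim_col X * dim_col Y \<Longrightarrow>
   kron X Y $$ (i,j) = X $$ (i div dim_row Y, j div dim_col Y) * Y $$ (i mod dim_row Y, j mod dim_col Y)"
  by (simp add: kron_def)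

lemma blockK:
  fixes X A :: "complex mat"
  assumes X: "X \<in> carrier_mat M M" and A: "A \<in> carrier_mat N N"
    and i: "i < L*M*N" and j: "j < L*M*N"
    and nz: "kron (kron (1\<^sub>m L) X) A $$ (i,j) \<noteq> 0"
  shows "i div (M*N) = j div (M*N)"
proof -
  have i1: "i div N < L*M" using i by (metis less_mult_imp_div_less)
  have j1: "j div N < L*M" using j by (metis less_mult_imp_div_less)
  have i2: "i div N div M < L" using i1 by (metis less_mult_imp_div_less)
  have j2: "j div N div M < L" using j1 by (metis less_mult_imp_div_less)
  from nz have "kron (1\<^sub>m L) X $$ (i div N, j div N) \<noteq> 0"
    using X A i j by (subst (asm) kron_index) auto
  then have "(1\<^sub>m L :: complex mat) $$ (i div N div M, j div N div M) \<noteq> 0"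
    using X i1 j1 by (subst (asm) kron_index) auto
  then have "i div N div M = j div N div M" using i2 j2 by (auto split: if_splits)
  then show ?thesis by (metis div_mult2_eq mult.commute)
qed

lemma blockG:
  assumes i: "i < L*M*N" and j: "j < L*M*N"
    and nz: "kron (E_mat L) (kron (N_mat M) (1\<^sub>m N)) $$ (i,j) \<noteq> 0"
  shows "i div (M*N) = Suc (j div (M*N))"
proof -
  have i1: "i div (M*N) < L" using i by (metis less_mult_imp_div_less mult.assoc)
  have j1: "j div (M*N) < L" using j by (metis less_mult_imp_div_less mult.assoc)
  from nz have "E_mat L $$ (i div (M*N), j div (M*N)) \<noteq> 0"
    using i j by (subst (asm) kron_index) (auto simp: E_mat_def N_mat_def mult.assoc)
  then show ?thesis using i1 j1 by (auto simp: E_mat_def split: if_splits)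
qed

lemma mv_index: "X \<in> carrier_mat n n \<Longrightarrow> v \<in> carrier_vec n \<Longrightarrow> i < n \<Longrightarrow>
   (X *\<^sub>v v) $ i = (\<Sum>j<n. X $$ (i,j) * v $ j)"
  by (auto simp: scalar_prod_def atLeast0LessThan intro!: sum.cong)

theorem lemma1:
  fixes L M N :: nat and \<tau> :: "nat \<Rightarrow> real" and QD :: "real mat" and A :: "complex mat"
  assumes "0 < L" and "0 < M" and "0 < N"
    and "gauss_radau_right M \<tau>"
    and "QD \<in> carrier_mat M M" and "\<forall>i j. i < j \<and> j < M \<longrightarrow> QD $$ (i,j) = 0"
    and "A \<in> carrier_mat N N"
  shows "\<exists>\<mu>s > 0. \<exists>c > 0. \<forall>\<mu>::real. 0 < \<mu> \<and> \<mu> < \<mu>s \<longrightarrow>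
           invertible_mat (P_hat L M N QD A \<mu>) \<longrightarrow>
           spectral_radius (T_S L M N \<tau> QD A \<mu>) \<le> c * \<mu> powr (1 / real L)"
proof -
  note Lp = assms(1) and Mp = assms(2) and Np = assms(3) and QDc = assms(5) and Ac = assms(7)
  define n where "n = L*M*N"
  have npos: "n > 0" using Lp Mp Np by (simp add: n_def)
  define K where "K = kron (kron (1\<^sub>m L) (cmat_of QD)) A"
  define KQ where "KQ = kron (kron (1\<^sub>m L) (cmat_of (coll_Q M \<tau>))) A"
  define G where "G = kron (E_mat L) (kron (N_mat M) (1\<^sub>m N))"
  have cQD: "cmat_of QD \<in> carrier_mat M M" using QDc by (simp add: cmat_of_def)
  have cQ: "cmat_of (coll_Q M \<tau>) \<in> carrier_mat M M" by (simp add: cmat_of_def coll_Q_def)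
  have Kc: "K \<in> carrier_mat n n" using cQD Ac unfolding K_def n_def carrier_mat_def by auto
  have KQc: "KQ \<in> carrier_mat n n" using cQ Ac unfolding KQ_def n_def carrier_mat_def by auto
  have Gc: "G \<in> carrier_mat n n" unfolding G_def n_def carrier_mat_def E_mat_def N_mat_def by (simp add: ac_simps)
  define gs where "gs = (\<Sum>i<n. \<Sum>j<n. cmod (G $$ (i,j)))"
  define ks where "ks = (\<Sum>i<n. \<Sum>j<n. cmod (K $$ (i,j)))"
  define rs where "rs = (\<Sum>i<n. \<Sum>j<n. cmod (KQ $$ (i,j) - K $$ (i,j)))"
  have gs0: "gs \<ge> 0" "ks \<ge> 0" "rs \<ge> 0" unfolding gs_def ks_def rs_def by (auto intro!: sum_nonneg)
  define \<mu>s where "\<mu>s = min 1 (1 / (2 * ks + 1))"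
  define c where "c = 2 * (gs + rs) + 1"
  have "\<mu>s > 0" using gs0 by (simp add: \<mu>s_def)
  moreover have "c > 0" using gs0 by (simp add: c_def)
  moreover have "spectral_radius (T_S L M N \<tau> QD A \<mu>) \<le> c * \<mu> powr (1 / real L)"
    if mu: "0 < \<mu>" "\<mu> < \<mu>s" and inv: "invertible_mat (P_hat L M N QD A \<mu>)" for \<mu>
  proof -
    define \<mu>c where "\<mu>c = complex_of_real \<mu>"
    define P where "P = P_hat L M N QD A \<mu>"
    define C where "C = C_mat L M N \<tau> A \<mu>"
    define T where "T = T_S L M N \<tau> QD A \<mu>"
    have Peq: "P = 1\<^sub>m n - \<mu>c \<cdot>\<^sub>m K" by (simp add: P_def P_hat_def n_def \<mu>c_def K_def)
    have Ceq: "C = 1\<^sub>m n - \<mu>c \<cdot>\<^sub>m KQ - G" by (simp add: C_def C_mat_def n_def \<mu>c_def KQ_def G_def)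
    have Pc: "P \<in> carrier_mat n n" using Kc by (simp add: Peq minus_carrier_mat)
    have Cc: "C \<in> carrier_mat n n" using KQc Gc by (simp add: Ceq minus_carrier_mat)
    obtain Pi where Pi: "mat_inverse P = Some Pi"
    proof (cases "mat_inverse P")
      case None
      from inv obtain B where B: "P * B = 1\<^sub>m n" "B * P = 1\<^sub>m (dim_row B)"
        using Pc unfolding P_def[symmetric] invertible_mat_def inverts_mat_def by auto
      have Bc: "B \<in> carrier_mat n n"
        using B Pc by (metis carrier_matD(1,2) carrier_matI index_mult_mat(2,3) index_one_mat(2,3))
      have "P \<in> Units (ring_mat TYPE(complex) n ())"
        using Pc Bc B unfolding Units_def ring_mat_simps by (auto simp: carrier_matD)
      then show ?thesis using mat_inverse(1)[OF Pc None, where b="()"] by auto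
    qed (auto)
    from mat_inverse(2)[OF Pc Pi] have PPi: "P * Pi = 1\<^sub>m n" and Pic: "Pi \<in> carrier_mat n n" by auto
    have Teq: "T = 1\<^sub>m n - Pi * C" by (simp add: T_def T_S_def n_def Pi P_def[symmetric] C_def[symmetric])
    have Tc: "T \<in> carrier_mat n n" using Pic Cc by (simp add: Teq minus_carrier_mat)
    have PT: "P * T = P - C"
    proof -
      have "P * T = P * 1\<^sub>m n - P * (Pi * C)"
        unfolding Teq using Pc Pic Cc by (intro mult_minus_distrib_mat) auto
      also have "P * (Pi * C) = (P * Pi) * C" using Pc Pic Cc by simp
      also have "\<dots> = C" using PPi Cc by (simp add: left_mult_one_mat)
      finally show ?thesis using Pc by simp
    qed
    obtain lam where lam: "spectral_radius T = cmod lam" "eigenvalue T lam"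
      using spectral_radius_mem_max(1)[OF Tc npos] unfolding spectrum_def by auto
    from lam(2) obtain v where v: "v \<in> carrier_vec n" "v \<noteq> 0\<^sub>v n" "T *\<^sub>v v = lam \<cdot>\<^sub>v v"
      unfolding eigenvalue_def eigenvector_def using Tc by auto
    have "(P - C) *\<^sub>v v = P *\<^sub>v (T *\<^sub>v v)" using PT Pc Tc v(1) by (metis assoc_mult_mat_vec)
    also have "\<dots> = lam \<cdot>\<^sub>v (P *\<^sub>v v)" using v Pc by (simp add: mult_mat_vec)
    finally have ev: "(P - C) *\<^sub>v v = lam \<cdot>\<^sub>v (P *\<^sub>v v)" .
    have PCc: "P - C \<in> carrier_mat n n" using Cc by (rule minus_carrier_mat)
    have eq: "lam * v $ i = (\<Sum>j<n. G $$ (i,j) * v $ j) + \<mu>c * (\<Sum>j<n. (KQ $$ (i,j) - K $$ (i,j)) * v $ j)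
               + lam * \<mu>c * (\<Sum>j<n. K $$ (i,j) * v $ j)" if i: "i < n" for i
    proof -
      have e1: "((P - C) *\<^sub>v v) $ i = (\<Sum>j<n. (\<mu>c * (KQ $$ (i,j) - K $$ (i,j)) + G $$ (i,j)) * v $ j)"
        unfolding mv_index[OF PCc v(1) i]
        using i Kc KQc Gc by (intro sum.cong) (auto simp: Peq Ceq algebra_simps)
      have e2: "(P *\<^sub>v v) $ i = (\<Sum>j<n. ((if i = j then 1 else 0) - \<mu>c * K $$ (i,j)) * v $ j)"
        unfolding mv_index[OF Pc v(1) i]
        using i Kc by (intro sum.cong) (auto simp: Peq)
      have e3: "(\<Sum>j<n. ((if i = j then 1 else 0) - \<mu>c * K $$ (i,j)) * v $ j)
          = v $ i - \<mu>c * (\<Sum>j<n. K $$ (i,j) * v $ j)"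
      proof -
        have d: "(\<Sum>j<n. (if i = j then 1 else 0) * v $ j) = (\<Sum>j<n. if i = j then v $ j else 0)"
          by (rule sum.cong) auto
        have "(\<Sum>j<n. ((if i = j then 1 else 0) - \<mu>c * K $$ (i,j)) * v $ j)
           = (\<Sum>j<n. (if i = j then 1 else 0) * v $ j) - (\<Sum>j<n. \<mu>c * (K $$ (i,j) * v $ j))"
          by (simp add: left_diff_distrib sum_subtractf mult.assoc)
        also have "\<dots> = v $ i - \<mu>c * (\<Sum>j<n. K $$ (i,j) * v $ j)"
          using i by (simp add: d sum_distrib_left)
        finally show ?thesis .
      qed
      have e4: "(\<Sum>j<n. (\<mu>c * (KQ $$ (i,j) - K $$ (i,j)) + G $$ (i,j)) * v $ j)
          = \<mu>c * (\<Sum>j<n. (KQ $$ (i,j) - K $$ (i,j)) * v $ j) + (\<Sum>j<n. G $$ (i,j) * v $ j)"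
        by (simp add: distrib_right sum.distrib sum_distrib_left mult.assoc)
      have "((P - C) *\<^sub>v v) $ i = lam * (P *\<^sub>v v) $ i"
        using ev i Pc by (simp add: arg_cong[OF ev, of "\<lambda>x. x $ i"])
      then show ?thesis unfolding e1 e2 e3 e4 by (simp add: algebra_simps)
    qed
    define \<epsilon> where "\<epsilon> = \<mu> powr (1 / real L)"
    have ep: "\<epsilon> > 0" using mu by (simp add: \<epsilon>_def)
    have exv: "\<exists>j<n. v $ j \<noteq> 0"
    proof (rule ccontr)
      assume "\<not> ?thesis"
      then have "v = 0\<^sub>v n" using v(1) by (intro eq_vecI) auto
      with v(2) show False by simp
    qed
    have hg: "\<And>i j. i<n \<Longrightarrow> j<n \<Longrightarrow> G $$ (i,j) \<noteq> 0 \<Longrightarrow> i div (M*N) = Suc (j div (M*N))"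
      using blockG unfolding G_def n_def by blast
    have hk: "\<And>i j. i<n \<Longrightarrow> j<n \<Longrightarrow> K $$ (i,j) \<noteq> 0 \<Longrightarrow> i div (M*N) = j div (M*N)"
      using blockK[OF cQD Ac] unfolding K_def n_def by blast
    have hq: "\<And>i j. i<n \<Longrightarrow> j<n \<Longrightarrow> KQ $$ (i,j) \<noteq> 0 \<Longrightarrow> i div (M*N) = j div (M*N)"
      using blockK[OF cQ Ac] unfolding KQ_def n_def by blast
    have hr: "\<And>i j. i<n \<Longrightarrow> j<n \<Longrightarrow> KQ $$ (i,j) - K $$ (i,j) \<noteq> 0 \<Longrightarrow> i div (M*N) = j div (M*N)"
    proof -
      fix i j assume "i<n" "j<n" "KQ $$ (i,j) - K $$ (i,j) \<noteq> 0"
      then show "i div (M*N) = j div (M*N)"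
        using hk[of i j] hq[of i j] by (cases "K $$ (i,j) = 0") auto
    qed
    have bnd: "cmod lam \<le> \<epsilon> * gs + \<mu> * rs + cmod lam * \<mu> * ks"
      unfolding gs_def rs_def ks_def
      by (rule key[where g = "\<lambda>i j. G $$ (i,j)" and k = "\<lambda>i j. K $$ (i,j)"
            and r = "\<lambda>i j. KQ $$ (i,j) - K $$ (i,j)" and v = "\<lambda>j. v $ j" and b = "\<lambda>i. i div (M*N)"
            and \<mu> = \<mu> and \<epsilon> = \<epsilon> and n = n, OF exv ep _ hg hk hr eq[unfolded \<mu>c_def]])
         (use mu in auto)
    have mu1: "\<mu> < 1" and muks: "\<mu> * ks \<le> 1/2"
    proof -
      show "\<mu> < 1" using mu by (simp add: \<mu>s_def)
      have "\<mu> < 1 / (2 * ks + 1)" using mu by (simp add: \<mu>s_def)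
      then have "\<mu> * (2 * ks + 1) < 1" using gs0 by (simp add: field_simps)
      then show "\<mu> * ks \<le> 1/2" using mu gs0 by (simp add: algebra_simps)
    qed
    have "cmod lam * \<mu> * ks \<le> cmod lam * (1/2)"
      using mult_left_mono[OF muks norm_ge_zero[of lam]] by (simp add: mult.assoc)
    then have l1: "cmod lam \<le> \<epsilon> * gs + \<mu> * rs + cmod lam * (1/2)"
      using bnd by (meson add_left_mono order_trans)
    then have l2: "cmod lam \<le> 2 * (\<epsilon> * gs + \<mu> * rs)" by (simp add: field_simps)
    have me: "\<mu> \<le> \<epsilon>"
    proof -
      have "\<mu> powr 1 \<le> \<mu> powr (1 / real L)"
        by (rule powr_mono') (use mu1 mu Lp in auto)
      then show ?thesis using mu by (simp add: \<epsilon>_def)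
    qed
    have "\<mu> * rs \<le> \<epsilon> * rs" using me gs0 by (simp add: mult_right_mono)
    then have "cmod lam \<le> 2 * (gs + rs) * \<epsilon>" using l2 by (simp add: algebra_simps)
    also have "\<dots> \<le> c * \<epsilon>" using ep by (simp add: c_def)
    finally show ?thesis using lam(1) by (simp add: T_def \<epsilon>_def)
  qed
  ultimately show ?thesis by blast
qed

end
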